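(* If $C$ and $D$ are finite connected racks such that $b(C)=b(D)$ in the Burnside ring $\mathrm{B}(\mathcal{R})$ of finite racks, then $C\cong D$ as racks.
   Context: A rack is a set $R$ with a binary operation $\rhd$ such that every left multiplication $\ell_a\colon b\mapsto a\rhd b$ is a bijection and $a\rhd(b\rhd c)=(a\rhd b)\rhd(a\rhd c)$ for all $a,b,c$. The inner automorphism group $\mathrm{Inn}(R)$ is the subgroup of the symmetric group on $R$ generated by all $\ell_a$. A rack is connected if it is non-empty and $\mathrm{Inn}(R)$ acts transitively on $R$. A subrack of $R$ is a subset $S$ with $\ell_s(S)=S$ for all $s\in S$. A decomposition of $R$ into $S$ and $T$ means that $S,T$ are disjoint subracks (possibly empty) with $S\cup T=R$. The Burnside ring of finite racks $\mathrm{B}(\mathcal{R})$ is the abelian group generated by symbols $b(R)$, one for each finite rack $R$, subject to the relations $b(R_1)=b(R_2)$ whenever $R_1\cong R_2$, and $b(R)=b(S)+b(T)$ whenever $R$ decomposes into subracks $S$ and $T$. *)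

theory Defs
  imports Main
begin

text \<open>A rack is given by a carrier set together with a binary operation
  (values of the operation outside the carrier are irrelevant).
  Finite racks are taken with carrier a subset of nat; every finite rack is
  isomorphic to such a one.\<close>

type_synonym rk = "nat set \<times> (nat \<Rightarrow> nat \<Rightarrow> nat)"

definition is_rack :: "'a set \<Rightarrow> ('a \<Rightarrow> 'a \<Rightarrow> 'a) \<Rightarrow> bool" where
  "is_rack R op \<longleftrightarrow>
     (\<forall>a\<in>R. bij_betw (op a) R R) \<and>
     (\<forall>a\<in>R. \<forall>b\<in>R. \<forall>c\<in>R. op a (op b c) = op (op a b) (op a c))"

text \<open>Orbit of x under the group generated by the left multiplications
  and their inverses (i.e. under Inn(R)).\<close>
inductive_set inn_orbit :: "'a set \<Rightarrow> ('a \<Rightarrow> 'a \<Rightarrow> 'a) \<Rightarrow> 'a \<Rightarrow> 'a set"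
  for R op x where
  base: "x \<in> inn_orbit R op x"
| left: "y \<in> inn_orbit R op x \<Longrightarrow> a \<in> R \<Longrightarrow> op a y \<in> inn_orbit R op x"
| left_inv: "y \<in> inn_orbit R op x \<Longrightarrow> a \<in> R \<Longrightarrow>
      the_inv_into R (op a) y \<in> inn_orbit R op x"

definition connected_rack :: "'a set \<Rightarrow> ('a \<Rightarrow> 'a \<Rightarrow> 'a) \<Rightarrow> bool" where
  "connected_rack R op \<longleftrightarrow> R \<noteq> {} \<and> (\<forall>x\<in>R. \<forall>y\<in>R. y \<in> inn_orbit R op x)"

definition subrack :: "'a set \<Rightarrow> 'a set \<Rightarrow> ('a \<Rightarrow> 'a \<Rightarrow> 'a) \<Rightarrow> bool" where
  "subrack S R op \<longleftrightarrow> S \<subseteq> R \<and> (\<forall>s\<in>S. op s ` S = S)"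

definition rack_iso ::
  "'a set \<Rightarrow> ('a \<Rightarrow> 'a \<Rightarrow> 'a) \<Rightarrow> 'b set \<Rightarrow> ('b \<Rightarrow> 'b \<Rightarrow> 'b) \<Rightarrow> bool" where
  "rack_iso R op R' op' \<longleftrightarrow>
     (\<exists>f. bij_betw f R R' \<and> (\<forall>a\<in>R. \<forall>b\<in>R. f (op a b) = op' (f a) (f b)))"

text \<open>Free abelian group on the symbols b(R): functions rk \<Rightarrow> int
  (of finite support); the generator b(R) is the indicator of R.\<close>
definition gen :: "rk \<Rightarrow> rk \<Rightarrow> int" where
  "gen k = (\<lambda>j. if j = k then 1 else 0)"

definition fin_rack :: "rk \<Rightarrow> bool" where
  "fin_rack k \<longleftrightarrow> finite (fst k) \<and> is_rack (fst k) (snd k)"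

definition burnside_rels :: "(rk \<Rightarrow> int) set" where
  "burnside_rels =
     {(\<lambda>j. gen R1 j - gen R2 j) | R1 R2.
        fin_rack R1 \<and> fin_rack R2 \<and> rack_iso (fst R1) (snd R1) (fst R2) (snd R2)}
   \<union> {(\<lambda>j. gen (R, op) j - gen (S, op) j - gen (T, op) j) | R op S T.
        fin_rack (R, op) \<and> subrack S R op \<and> subrack T R op \<and>
        S \<inter> T = {} \<and> S \<union> T = R}"

inductive_set burnside_span :: "(rk \<Rightarrow> int) set" where
  zero: "(\<lambda>j. 0) \<in> burnside_span"
| rel: "x \<in> burnside_rels \<Longrightarrow> x \<in> burnside_span"
| diff: "x \<in> burnside_span \<Longrightarrow> y \<in> burnside_span \<Longrightarrow> (\<lambda>j. x j - y j) \<in> burnside_span"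

definition burnside_eq :: "rk \<Rightarrow> rk \<Rightarrow> bool" where
  "burnside_eq C D \<longleftrightarrow> (\<lambda>j. gen C j - gen D j) \<in> burnside_span"

end

theory Submission
  imports Defs "HOL-Library.FuncSet"
begin

definition ihoms :: "nat set \<Rightarrow> (nat\<Rightarrow>nat\<Rightarrow>nat) \<Rightarrow> nat set \<Rightarrow> (nat\<Rightarrow>nat\<Rightarrow>nat) \<Rightarrow> (nat \<Rightarrow> nat) set" where
  "ihoms A opA B opB = {g \<in> A \<rightarrow>\<^sub>E B. inj_on g A \<and> (\<forall>a\<in>A. \<forall>b\<in>A. g (opA a b) = opB (g a) (g b))}"

definition NN :: "rk \<Rightarrow> rk \<Rightarrow> nat" where
  "NN X j = card (ihoms (fst X) (snd X) (fst j) (snd j))"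

definition Phi :: "rk \<Rightarrow> (rk \<Rightarrow> int) \<Rightarrow> int" where
  "Phi X x = (\<Sum>j\<in>{j. x j \<noteq> 0}. x j * int (NN X j))"

lemma finite_ihoms: "finite A \<Longrightarrow> finite B \<Longrightarrow> finite (ihoms A opA B opB)"
  unfolding ihoms_def by (rule finite_subset[OF _ finite_PiE[of A "\<lambda>_. B"]]) auto

lemma ihoms_mono: "S \<subseteq> R \<Longrightarrow> ihoms A opA S op \<subseteq> ihoms A opA R op"
  unfolding ihoms_def using PiE_mono[of A "\<lambda>_. S" "\<lambda>_. R"] by blast

lemma ihoms_val: "g \<in> ihoms A opA S op \<Longrightarrow> x \<in> A \<Longrightarrow> g x \<in> S"
  unfolding ihoms_def by blast

lemma ihoms_restr: "g \<in> ihoms A opA R op \<Longrightarrow> \<forall>y\<in>A. g y \<in> S \<Longrightarrow> g \<in> ihoms A opA S op"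
  unfolding ihoms_def PiE_iff by blast

lemma Phi_eq:
  assumes "finite U" "{j. x j \<noteq> 0} \<subseteq> U"
  shows "Phi X x = (\<Sum>j\<in>U. x j * int (NN X j))"
  unfolding Phi_def
  by (rule sum.mono_neutral_left) (use assms finite_subset in auto)

lemma gen_sum:
  assumes "finite U" "k \<in> U"
  shows "(\<Sum>j\<in>U. gen k j * c j) = (c k :: int)"
proof -
  have "(\<Sum>j\<in>U. gen k j * c j) = (\<Sum>j\<in>U. if j = k then c j else 0)"
    by (rule sum.cong) (auto simp: gen_def)
  also have "\<dots> = c k" using assms by simp
  finally show ?thesis .
qed

lemma rack_inv:
  assumes "is_rack A opA" "a \<in> A" "y \<in> A"
  shows "the_inv_into A (opA a) y \<in> A \<and> opA a (the_inv_into A (opA a) y) = y"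
proof -
  have b: "bij_betw (opA a) A A" using assms unfolding is_rack_def by auto
  show ?thesis
    using the_inv_into_into[OF bij_betw_imp_inj_on[OF b], of y A]
      f_the_inv_into_f_bij_betw[OF b] assms(3) b
    by (auto simp: bij_betw_def)
qed

lemma rack_closed:
  assumes "is_rack A opA" "a \<in> A" "y \<in> A"
  shows "opA a y \<in> A"
  using assms unfolding is_rack_def bij_betw_def by auto

lemma part_inv:
  assumes "is_rack R op" "subrack S R op" "subrack T R op" "S \<inter> T = {}" "S \<union> T = R"
    "a \<in> R" "z \<in> R"
  shows "op a z \<in> S \<longleftrightarrow> z \<in> S"
proof -
  have inj: "inj_on (op a) R" using assms(1,6) unfolding is_rack_def bij_betw_def by simp
  have cl: "op a z \<in> R" using rack_closed[OF assms(1,6,7)] .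
  have SR: "S \<subseteq> R" "T \<subseteq> R" using assms(5) by auto
  show ?thesis
  proof (cases "a \<in> S")
    case True
    then have im: "op a ` S = S" using assms(2) unfolding subrack_def by simp
    show ?thesis
    proof
      assume "op a z \<in> S"
      then have "op a z \<in> op a ` S" using im by simp
      then obtain s where s: "s \<in> S" "op a z = op a s" by (rule imageE)
      have "z = s" using inj_onD[OF inj s(2) assms(7)] s(1) SR(1) by blast
      then show "z \<in> S" using s(1) by simp
    next
      assume "z \<in> S" then show "op a z \<in> S" using im by blast
    qed
  next
    case False
    then have aT: "a \<in> T" using assms(5,6) by blast
    then have im: "op a ` T = T" using assms(3) unfolding subrack_def by simp
    show ?thesis
    proof
      assume h: "op a z \<in> S"
      show "z \<in> S"
      proof (rule ccontr)
        assume "z \<notin> S"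
        then have "z \<in> T" using assms(5,7) by blast
        then have "op a z \<in> T" using im by blast
        then show False using h assms(4) by blast
      qed
    next
      assume z: "z \<in> S"
      show "op a z \<in> S"
      proof (rule ccontr)
        assume "op a z \<notin> S"
        then have "op a z \<in> T" using cl assms(5) by blast
        then have "op a z \<in> op a ` T" using im by simp
        then obtain t where t: "t \<in> T" "op a z = op a t" by (rule imageE)
        have "z = t" using inj_onD[OF inj t(2) assms(7)] t(1) SR(2) by blast
        then show False using z t(1) assms(4) by blast
      qed
    qed
  qed
qed

lemma orbit_part:
  assumes "is_rack A opA" "x0 \<in> A" "\<forall>y\<in>A. g y \<in> R"
    "\<forall>a\<in>A. \<forall>b\<in>A. g (opA a b) = op (g a) (g b)"
    "\<And>a z. a \<in> R \<Longrightarrow> z \<in> R \<Longrightarrow> op a z \<in> S \<longleftrightarrow> z \<in> S"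
    "y \<in> inn_orbit A opA x0"
  shows "y \<in> A \<and> (g y \<in> S \<longleftrightarrow> g x0 \<in> S)"
  using assms(6)
proof (induction rule: inn_orbit.induct)
  case base
  then show ?case using assms(2) by simp
next
  case (left y a)
  have yA: "y \<in> A" and ih: "g y \<in> S \<longleftrightarrow> g x0 \<in> S" using left.IH by auto
  have aA: "a \<in> A" using left.hyps(2) .
  have c: "opA a y \<in> A" using rack_closed[OF assms(1) aA yA] .
  have e: "g (opA a y) = op (g a) (g y)" using assms(4) aA yA by blast
  have gaR: "g a \<in> R" "g y \<in> R" using assms(3) aA yA by auto
  have "op (g a) (g y) \<in> S \<longleftrightarrow> g y \<in> S" using assms(5)[OF gaR] .
  then show ?case using c e ih by simp
next
  case (left_inv y a)
  have yA: "y \<in> A" and ih: "g y \<in> S \<longleftrightarrow> g x0 \<in> S" using left_inv.IH by auto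
  have aA: "a \<in> A" using left_inv.hyps(2) .
  define w where "w = the_inv_into A (opA a) y"
  have w: "w \<in> A" "opA a w = y" using rack_inv[OF assms(1) aA yA] unfolding w_def by auto
  have e: "g y = op (g a) (g w)" using assms(4) w aA by blast
  have gaR: "g a \<in> R" "g w \<in> R" using assms(3) aA w(1) by auto
  have "op (g a) (g w) \<in> S \<longleftrightarrow> g w \<in> S" using assms(5)[OF gaR] .
  then have "g w \<in> S \<longleftrightarrow> g x0 \<in> S" using e ih by simp
  then show ?case using w(1) unfolding w_def by simp
qed

lemma subrack_fin:
  assumes "finite R" "subrack S R op"
  shows "finite S"
  using assms finite_subset unfolding subrack_def by blast

lemma NN_decomp:
  assumes X: "connected_rack (fst X) (snd X)" "fin_rack X"
    and R: "fin_rack (R, op)" "subrack S R op" "subrack T R op" "S \<inter> T = {}" "S \<union> T = R"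
  shows "NN X (R, op) = NN X (S, op) + NN X (T, op)"
proof -
  obtain A opA where XA: "X = (A, opA)" by (cases X)
  have rA: "is_rack A opA" "finite A" using X(2) XA unfolding fin_rack_def by auto
  obtain x0 where x0: "x0 \<in> A" using X(1) XA unfolding connected_rack_def by auto
  have orb: "\<forall>y\<in>A. y \<in> inn_orbit A opA x0" using X(1) XA x0 unfolding connected_rack_def by auto
  have rR: "is_rack R op" "finite R" using R(1) unfolding fin_rack_def by auto
  have SR: "S \<subseteq> R" "T \<subseteq> R" using R unfolding subrack_def by auto
  have pi: "\<And>a z. a \<in> R \<Longrightarrow> z \<in> R \<Longrightarrow> op a z \<in> S \<longleftrightarrow> z \<in> S"
    using part_inv[OF rR(1) R(2-5)] by blast
  have eq: "ihoms A opA R op = ihoms A opA S op \<union> ihoms A opA T op"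
  proof
    show "ihoms A opA S op \<union> ihoms A opA T op \<subseteq> ihoms A opA R op"
      using ihoms_mono[OF SR(1)] ihoms_mono[OF SR(2)] by (rule Un_least)
  next
    show "ihoms A opA R op \<subseteq> ihoms A opA S op \<union> ihoms A opA T op"
    proof
      fix g assume g: "g \<in> ihoms A opA R op"
      have gR: "\<forall>y\<in>A. g y \<in> R" using ihoms_val[OF g] by blast
      have gh: "\<forall>a\<in>A. \<forall>b\<in>A. g (opA a b) = op (g a) (g b)"
        using g by (simp add: ihoms_def)
      have key: "\<forall>y\<in>A. g y \<in> S \<longleftrightarrow> g x0 \<in> S"
        using orbit_part[OF rA(1) x0 gR gh pi] orb by blast
      show "g \<in> ihoms A opA S op \<union> ihoms A opA T op"
      proof (cases "g x0 \<in> S")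
        case True
        then have "\<forall>y\<in>A. g y \<in> S" using key by blast
        then show ?thesis using g ihoms_restr by blast
      next
        case False
        then have "\<forall>y\<in>A. g y \<in> T" using key gR R(5) by blast
        then show ?thesis using g ihoms_restr by blast
      qed
    qed
  qed
  have disj: "ihoms A opA S op \<inter> ihoms A opA T op = {}"
    using x0 R(4) ihoms_val by blast
  have fS: "finite S" "finite T" using SR rR(2) finite_subset by auto
  have f1: "finite (ihoms A opA S op)" by (rule finite_ihoms[OF rA(2) fS(1)])
  have f2: "finite (ihoms A opA T op)" by (rule finite_ihoms[OF rA(2) fS(2)])
  show ?thesis
    unfolding NN_def XA fst_conv snd_conv eq using card_Un_disjoint[OF f1 f2 disj] .
qed

lemma iso_inv:
  assumes "is_rack A opA" "bij_betw f A B" "\<forall>a\<in>A. \<forall>b\<in>A. f (opA a b) = opB (f a) (f b)"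
  shows "bij_betw (the_inv_into A f) B A \<and>
     (\<forall>a\<in>B. \<forall>b\<in>B. the_inv_into A f (opB a b) = opA (the_inv_into A f a) (the_inv_into A f b))"
proof -
  have b: "bij_betw (the_inv_into A f) B A" using bij_betw_the_inv_into[OF assms(2)] .
  have i: "inj_on f A" using assms(2) bij_betw_def by blast
  have "the_inv_into A f (opB a b) = opA (the_inv_into A f a) (the_inv_into A f b)"
    if ab: "a \<in> B" "b \<in> B" for a b
  proof -
    let ?a = "the_inv_into A f a" and ?b = "the_inv_into A f b"
    have in1: "?a \<in> A" "?b \<in> A" using b ab bij_betwE by blast+
    have "f ?a = a" "f ?b = b" using f_the_inv_into_f_bij_betw[OF assms(2)] ab by auto
    then have "f (opA ?a ?b) = opB a b" using assms(3) in1 by metis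
    moreover have "opA ?a ?b \<in> A" using rack_closed[OF assms(1) in1] .
    ultimately show ?thesis using the_inv_into_f_f[OF i] by metis
  qed
  then show ?thesis using b by blast
qed

lemma NN_iso_le:
  assumes "finite (fst X)" "finite B" "bij_betw f R B" "\<forall>a\<in>R. \<forall>b\<in>R. f (op a b) = opB (f a) (f b)"
    "is_rack (fst X) (snd X)"
  shows "NN X (R, op) \<le> NN X (B, opB)"
proof -
  obtain A opA where XA: "X = (A, opA)" by (cases X)
  let ?h = "\<lambda>g. restrict (f \<circ> g) A"
  have fi: "inj_on f R" "f ` R = B" using assms(3) unfolding bij_betw_def by auto
  have "card (ihoms A opA R op) \<le> card (ihoms A opA B opB)"
  proof (rule card_inj_on_le)
    show "inj_on ?h (ihoms A opA R op)"
    proof (rule inj_onI)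
      fix g1 g2 assume g: "g1 \<in> ihoms A opA R op" "g2 \<in> ihoms A opA R op" "?h g1 = ?h g2"
      show "g1 = g2"
      proof (rule extensionalityI[of _ A])
        show "g1 \<in> extensional A" "g2 \<in> extensional A" using g(1,2) unfolding ihoms_def PiE_def by auto
        fix x assume x: "x \<in> A"
        have "f (g1 x) = f (g2 x)" using fun_cong[OF g(3), of x] x by simp
        moreover have "g1 x \<in> R" "g2 x \<in> R" using g(1,2) x unfolding ihoms_def by auto
        ultimately show "g1 x = g2 x" using fi(1) unfolding inj_on_def by blast
      qed
    qed
    show "?h ` ihoms A opA R op \<subseteq> ihoms A opA B opB"
    proof
      fix k assume "k \<in> ?h ` ihoms A opA R op"
      then obtain g where g: "g \<in> ihoms A opA R op" and k: "k = ?h g" by blast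
      have gR: "\<forall>y\<in>A. g y \<in> R" and gi: "inj_on g A"
        and gh: "\<forall>a\<in>A. \<forall>b\<in>A. g (opA a b) = op (g a) (g b)"
        using g unfolding ihoms_def by auto
      have "k \<in> A \<rightarrow>\<^sub>E B" using k gR fi(2) by auto
      moreover have "inj_on k A"
        using gi gR fi(1) k unfolding inj_on_def by auto
      moreover have "\<forall>a\<in>A. \<forall>b\<in>A. k (opA a b) = opB (k a) (k b)"
      proof (intro ballI)
        fix a b assume ab: "a \<in> A" "b \<in> A"
        have "opA a b \<in> A" using rack_closed[OF _ ab] assms(5) XA by auto
        then have "k (opA a b) = f (op (g a) (g b))" using k gh ab by simp
        also have "\<dots> = opB (f (g a)) (f (g b))" using assms(4) gR ab by blast
        also have "\<dots> = opB (k a) (k b)" using k ab by simp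
        finally show "k (opA a b) = opB (k a) (k b)" .
      qed
      ultimately show "k \<in> ihoms A opA B opB" unfolding ihoms_def by blast
    qed
    show "finite (ihoms A opA B opB)" using finite_ihoms assms(1,2) XA by auto
  qed
  then show ?thesis unfolding NN_def XA by simp
qed

lemma NN_iso:
  assumes "fin_rack X" "fin_rack R1" "fin_rack R2" "rack_iso (fst R1) (snd R1) (fst R2) (snd R2)"
  shows "NN X R1 = NN X R2"
proof -
  obtain A1 op1 where r1: "R1 = (A1, op1)" by (cases R1)
  obtain A2 op2 where r2: "R2 = (A2, op2)" by (cases R2)
  obtain f where f: "bij_betw f A1 A2" "\<forall>a\<in>A1. \<forall>b\<in>A1. f (op1 a b) = op2 (f a) (f b)"
    using assms(4) r1 r2 unfolding rack_iso_def by auto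
  have X: "finite (fst X)" "is_rack (fst X) (snd X)" using assms(1) unfolding fin_rack_def by auto
  have a1: "finite A1" "is_rack A1 op1" using assms(2) r1 unfolding fin_rack_def by auto
  have a2: "finite A2" using assms(3) r2 unfolding fin_rack_def by auto
  note inv = iso_inv[OF a1(2) f]
  have "NN X (A1, op1) \<le> NN X (A2, op2)" using NN_iso_le[OF X(1) a2 f X(2)] .
  moreover have "NN X (A2, op2) \<le> NN X (A1, op1)"
    using NN_iso_le[OF X(1) a1(1) _ _ X(2)] inv by blast
  ultimately show ?thesis using r1 r2 by simp
qed

lemma subrack_fin_rack:
  assumes "fin_rack (R, op)" "subrack S R op"
  shows "fin_rack (S, op)"
proof -
  have r: "finite R" "is_rack R op" using assms(1) unfolding fin_rack_def by auto
  have S: "S \<subseteq> R" "\<forall>s\<in>S. op s ` S = S" using assms(2) unfolding subrack_def by auto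
  have "bij_betw (op a) S S" if a: "a \<in> S" for a
  proof -
    have "inj_on (op a) R" using r(2) a S(1) unfolding is_rack_def bij_betw_def by auto
    then have "inj_on (op a) S" using S(1) inj_on_subset by blast
    then show ?thesis using S(2) a unfolding bij_betw_def by auto
  qed
  moreover have "finite S" using r(1) S(1) finite_subset by blast
  moreover have "\<forall>a\<in>S. \<forall>b\<in>S. \<forall>c\<in>S. op a (op b c) = op (op a b) (op a c)"
    using r(2) S(1) unfolding is_rack_def by blast
  ultimately show ?thesis unfolding fin_rack_def is_rack_def by auto
qed

lemma span_Phi:
  assumes X: "fin_rack X" "connected_rack (fst X) (snd X)"
    and x: "x \<in> burnside_span"
  shows "finite {j. x j \<noteq> 0} \<and> Phi X x = 0"
  using x
proof (induction rule: burnside_span.induct)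
  case zero
  then show ?case by (simp add: Phi_def)
next
  case (rel x)
  then show ?case
  proof (cases rule: UnE[OF rel[unfolded burnside_rels_def]])
    case 1
    then obtain R1 R2 where h: "x = (\<lambda>j. gen R1 j - gen R2 j)" "fin_rack R1" "fin_rack R2"
      "rack_iso (fst R1) (snd R1) (fst R2) (snd R2)" by blast
    have sub: "{j. x j \<noteq> 0} \<subseteq> {R1, R2}" using h(1) by (auto simp: gen_def)
    moreover have "finite {R1, R2}" by simp
    ultimately have fin: "finite {j. x j \<noteq> 0}" using finite_subset by blast
    have "Phi X x = (\<Sum>j\<in>{R1,R2}. x j * int (NN X j))" using Phi_eq[OF _ sub] by simp
    also have "\<dots> = (\<Sum>j\<in>{R1,R2}. gen R1 j * int (NN X j)) - (\<Sum>j\<in>{R1,R2}. gen R2 j * int (NN X j))"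
      unfolding h(1) by (simp add: left_diff_distrib sum_subtractf)
    also have "\<dots> = int (NN X R1) - int (NN X R2)" using gen_sum[of "{R1,R2}"] by simp
    also have "\<dots> = 0" using NN_iso[OF X(1) h(2-4)] by simp
    finally show ?thesis using fin by simp
  next
    case 2
    then obtain R op S T where h: "x = (\<lambda>j. gen (R, op) j - gen (S, op) j - gen (T, op) j)"
      "fin_rack (R, op)" "subrack S R op" "subrack T R op" "S \<inter> T = {}" "S \<union> T = R" by blast
    let ?U = "{(R,op), (S,op), (T,op)}"
    have sub: "{j. x j \<noteq> 0} \<subseteq> ?U" using h(1) by (auto simp: gen_def)
    moreover have "finite ?U" by simp
    ultimately have fin: "finite {j. x j \<noteq> 0}" using finite_subset by blast
    have "Phi X x = (\<Sum>j\<in>?U. x j * int (NN X j))" using Phi_eq[OF _ sub] by simp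
    also have "\<dots> = (\<Sum>j\<in>?U. gen (R,op) j * int (NN X j)) - (\<Sum>j\<in>?U. gen (S,op) j * int (NN X j))
        - (\<Sum>j\<in>?U. gen (T,op) j * int (NN X j))"
      unfolding h(1) by (simp add: left_diff_distrib sum_subtractf)
    also have "\<dots> = int (NN X (R,op)) - int (NN X (S,op)) - int (NN X (T,op))"
      using gen_sum[of ?U] by simp
    also have "\<dots> = 0" using NN_decomp[OF X(2,1) h(2-6)] by simp
    finally show ?thesis using fin by simp
  qed
next
  case (diff x y)
  let ?U = "{j. x j \<noteq> 0} \<union> {j. y j \<noteq> 0}"
  have fU: "finite ?U" using diff by simp
  have sub: "{j. x j - y j \<noteq> 0} \<subseteq> ?U" by auto
  have "Phi X (\<lambda>j. x j - y j) = (\<Sum>j\<in>?U. (x j - y j) * int (NN X j))"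
    using Phi_eq[OF fU sub] by simp
  also have "\<dots> = (\<Sum>j\<in>?U. x j * int (NN X j)) - (\<Sum>j\<in>?U. y j * int (NN X j))"
    by (simp add: left_diff_distrib sum_subtractf)
  also have "\<dots> = Phi X x - Phi X y"
    using Phi_eq[OF fU, of x X] Phi_eq[OF fU, of y X] by auto
  finally show ?case using diff fU sub finite_subset by auto
qed

lemma self_hom:
  assumes "fin_rack X" "connected_rack (fst X) (snd X)" "fin_rack D" "burnside_eq X D"
  shows "\<exists>g. g \<in> ihoms (fst X) (snd X) (fst D) (snd D)"
proof -
  have sp: "(\<lambda>j. gen X j - gen D j) \<in> burnside_span" using assms(4) unfolding burnside_eq_def .
  have sub: "{j. gen X j - gen D j \<noteq> 0} \<subseteq> {X, D}" by (auto simp: gen_def)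
  have "0 = Phi X (\<lambda>j. gen X j - gen D j)" using span_Phi[OF assms(1,2) sp] by simp
  also have "\<dots> = (\<Sum>j\<in>{X,D}. (gen X j - gen D j) * int (NN X j))" using Phi_eq[OF _ sub] by simp
  also have "\<dots> = (\<Sum>j\<in>{X,D}. gen X j * int (NN X j)) - (\<Sum>j\<in>{X,D}. gen D j * int (NN X j))"
    by (simp add: left_diff_distrib sum_subtractf)
  also have "\<dots> = int (NN X X) - int (NN X D)" using gen_sum[of "{X,D}"] by simp
  finally have eq: "NN X X = NN X D" by simp
  have fx: "finite (fst X)" "is_rack (fst X) (snd X)" using assms(1) unfolding fin_rack_def by auto
  have "restrict id (fst X) \<in> ihoms (fst X) (snd X) (fst X) (snd X)"
    using rack_closed[OF fx(2)] unfolding ihoms_def inj_on_def by auto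
  then have "NN X X \<noteq> 0" unfolding NN_def using finite_ihoms[OF fx(1) fx(1)] by (metis card_0_eq empty_iff)
  then have "NN X D \<noteq> 0" using eq by simp
  then show ?thesis unfolding NN_def by (metis card.empty ex_in_conv)
qed

theorem theorem4p2:
  fixes C D :: rk
  assumes "fin_rack C" and "fin_rack D"
    and "connected_rack (fst C) (snd C)" and "connected_rack (fst D) (snd D)"
    and "burnside_eq C D"
  shows "rack_iso (fst C) (snd C) (fst D) (snd D)"
proof -
  have sym: "burnside_eq D C"
  proof -
    have sp: "(\<lambda>j. gen C j - gen D j) \<in> burnside_span" using assms(5) unfolding burnside_eq_def .
    have "(\<lambda>j. (\<lambda>j. 0) j - (\<lambda>j. gen C j - gen D j) j) \<in> burnside_span"
      by (rule burnside_span.diff[OF burnside_span.zero sp])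
    then show ?thesis unfolding burnside_eq_def by simp
  qed
  obtain g where g: "g \<in> ihoms (fst C) (snd C) (fst D) (snd D)" using self_hom[OF assms(1,3,2,5)] by blast
  obtain h where h: "h \<in> ihoms (fst D) (snd D) (fst C) (snd C)" using self_hom[OF assms(2,4,1) sym] by blast
  have fin: "finite (fst C)" "finite (fst D)" using assms(1,2) unfolding fin_rack_def by auto
  have c1: "card (fst C) \<le> card (fst D)"
    using g fin by (intro card_inj_on_le[of g]) (auto simp: ihoms_def)
  have c2: "card (fst D) \<le> card (fst C)"
    using h fin by (intro card_inj_on_le[of h]) (auto simp: ihoms_def)
  have gi: "inj_on g (fst C)" "g ` fst C \<subseteq> fst D" using g unfolding ihoms_def by auto
  have "card (g ` fst C) = card (fst D)" using card_image[OF gi(1)] c1 c2 by simp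
  then have "g ` fst C = fst D" using card_subset_eq[OF fin(2) gi(2)] by simp
  then have "bij_betw g (fst C) (fst D)" using gi(1) unfolding bij_betw_def by simp
  then show ?thesis using g unfolding rack_iso_def ihoms_def by blast
qed

end
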